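(* The function $$u(z)=3\frac{(1-|z|^2)^4}{|1-z|^2}+3\frac{(1-|z|^2)^5}{|1-z|^4}-\frac{3}{2}\frac{(1-|z|^2)^4}{|1-z|^4}+\frac{(1-|z|^2)^6}{|1-z|^6},\quad z\in\mathbb{D},$$ is $w_2$-biharmonic in $\mathbb{D}$, i.e. $\Delta\big((1-|z|^2)^{-2}\Delta u\big)=0$ in $\mathbb{D}$.
   Context: $\mathbb{D}$ is the open unit disc and $\Delta=\partial^2/\partial z\partial\bar z$. The weight is $w_2(z)=(1-|z|^2)^2$, and $u$ is called $w_2$-biharmonic if $\Delta w_2^{-1}\Delta u=0$ in $\mathbb{D}$. *)

theory Defs
  imports "HOL-Analysis.Analysis"
begin

text \<open>Partial derivatives in x and y of a real-valued function on the complex plane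
(z = x + i y), and the operator Delta = d^2/(dz d zbar) = (1/4)(d_xx + d_yy).\<close>

definition pdx :: "(complex \<Rightarrow> real) \<Rightarrow> complex \<Rightarrow> real" where
  "pdx f z = deriv (\<lambda>t::real. f (z + of_real t)) 0"

definition pdy :: "(complex \<Rightarrow> real) \<Rightarrow> complex \<Rightarrow> real" where
  "pdy f z = deriv (\<lambda>t::real. f (z + \<i> * of_real t)) 0"

definition has_pdx :: "(complex \<Rightarrow> real) \<Rightarrow> complex \<Rightarrow> bool" where
  "has_pdx f z \<longleftrightarrow> (\<lambda>t::real. f (z + of_real t)) differentiable (at 0)"

definition has_pdy :: "(complex \<Rightarrow> real) \<Rightarrow> complex \<Rightarrow> bool" where
  "has_pdy f z \<longleftrightarrow> (\<lambda>t::real. f (z + \<i> * of_real t)) differentiable (at 0)"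

definition Lap :: "(complex \<Rightarrow> real) \<Rightarrow> complex \<Rightarrow> real" where
  "Lap f z = (pdx (pdx f) z + pdy (pdy f) z) / 4"

definition Lap_exists :: "(complex \<Rightarrow> real) \<Rightarrow> complex \<Rightarrow> bool" where
  "Lap_exists f z \<longleftrightarrow> 
     (\<forall>\<^sub>F w in at z. has_pdx f w \<and> has_pdy f w) \<and> has_pdx f z \<and> has_pdy f z \<and>
     has_pdx (pdx f) z \<and> has_pdy (pdy f) z"

definition w2 :: "complex \<Rightarrow> real" where
  "w2 z = (1 - (cmod z)^2)^2"

definition w2_biharmonic :: "(complex \<Rightarrow> real) \<Rightarrow> bool" where
  "w2_biharmonic u \<longleftrightarrow>
     (\<forall>z\<in>ball 0 1. Lap_exists u z \<and> Lap_exists (\<lambda>w. Lap u w / w2 w) z \<and>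
        Lap (\<lambda>w. Lap u w / w2 w) z = 0)"

end

theory Submission
  imports Defs
begin


lemma ev_shift:
  fixes w :: complex and c :: complex
  assumes "open A" "w \<in> A"
  shows "\<forall>\<^sub>F t in nhds (0::real). w + c * of_real t \<in> A"
proof -
  have "((\<lambda>t::real. w + c * of_real t) \<longlongrightarrow> w + c * of_real 0) (nhds 0)"
    by (intro tendsto_intros) (simp add: filterlim_ident)
  then have "((\<lambda>t::real. w + c * of_real t) \<longlongrightarrow> w) (nhds 0)" by simp
  from topological_tendstoD[OF this assms] show ?thesis .
qed

lemma pdx_open:
  assumes "open A" "\<And>w. w \<in> A \<Longrightarrow> f w = G (Re w) (Im w)"
    "\<And>w. w \<in> A \<Longrightarrow> ((\<lambda>s. G s (Im w)) has_real_derivative Gx w) (at (Re w))"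
    "w \<in> A"
  shows "has_pdx f w \<and> pdx f w = Gx w"
proof -
  have ev: "\<forall>\<^sub>F t in nhds 0. f (w + of_real t) = G (Re w + t) (Im w)"
    using ev_shift[OF assms(1,4), of 1]
    by eventually_elim (simp add: assms(2))
  have "((\<lambda>t. G (t + Re w) (Im w)) has_real_derivative Gx w) (at 0)"
    using assms(3)[OF assms(4)] DERIV_shift[of "\<lambda>s. G s (Im w)" "Gx w" 0 "Re w"] by simp
  then have d: "((\<lambda>t. G (Re w + t) (Im w)) has_real_derivative Gx w) (at 0)"
    by (simp add: add.commute)
  have "((\<lambda>t. f (w + of_real t)) has_real_derivative Gx w) (at 0)"
    using DERIV_cong_ev[OF refl ev refl] d by simp
  then show ?thesis unfolding has_pdx_def pdx_def
    using DERIV_imp_deriv real_differentiable_def by blast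
qed

lemma pdy_open:
  assumes "open A" "\<And>w. w \<in> A \<Longrightarrow> f w = G (Re w) (Im w)"
    "\<And>w. w \<in> A \<Longrightarrow> ((\<lambda>s. G (Re w) s) has_real_derivative Gy w) (at (Im w))"
    "w \<in> A"
  shows "has_pdy f w \<and> pdy f w = Gy w"
proof -
  have ev: "\<forall>\<^sub>F t in nhds 0. f (w + \<i> * of_real t) = G (Re w) (Im w + t)"
    using ev_shift[OF assms(1,4), of "\<i>"]
    by eventually_elim (simp add: assms(2))
  have "((\<lambda>t. G (Re w) (t + Im w)) has_real_derivative Gy w) (at 0)"
    using assms(3)[OF assms(4)] DERIV_shift[of "\<lambda>s. G (Re w) s" "Gy w" 0 "Im w"] by simp
  then have d: "((\<lambda>t. G (Re w) (Im w + t)) has_real_derivative Gy w) (at 0)"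
    by (simp add: add.commute)
  have "((\<lambda>t. f (w + \<i> * of_real t)) has_real_derivative Gy w) (at 0)"
    using DERIV_cong_ev[OF refl ev refl] d by simp
  then show ?thesis unfolding has_pdy_def pdy_def
    using DERIV_imp_deriv real_differentiable_def by blast
qed

definition Dp :: "real \<Rightarrow> real \<Rightarrow> real" where "Dp x y = (1-x)^2+y^2"
definition Sp :: "real \<Rightarrow> real \<Rightarrow> real" where "Sp x y = 1-x^2-y^2"
definition NU :: "real \<Rightarrow> real \<Rightarrow> real" where
  "NU x y = 3*Sp x y^4*Dp x y^2 + 3*Sp x y^5*Dp x y - 3/2*Sp x y^4*Dp x y + Sp x y^6"
definition AX :: "real \<Rightarrow> real \<Rightarrow> real" where
  "AX x y = 18 + (-78)*y^2 + 132*y^4 + (-108)*y^6 + 42*y^8 + (-6)*y^10 + (-108)*x^1 + 318*x^1*y^2 + (-330)*x^1*y^4 + 156*x^1*y^6 + (-48)*x^1*y^8 + 6*x^1*y^10 + 6*x^1*y^12 + 222*x^2 + (-504)*x^2*y^2 + 228*x^2*y^4 + 120*x^2*y^6 + (-18)*x^2*y^8 + (-48)*x^2*y^10 + (-66)*x^3 + 348*x^3*y^2 + (-252)*x^3*y^4 + (-240)*x^3*y^6 + 174*x^3*y^8 + 36*x^3*y^10 + (-444)*x^4 + 204*x^4*y^2 + 684*x^4*y^4 + (-204)*x^4*y^6 + (-240)*x^4*y^8 + 678*x^5 + (-972)*x^5*y^2 + (-432)*x^5*y^4 + 636*x^5*y^6 + 90*x^5*y^8 + (-132)*x^6 + 1176*x^6*y^2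 + (-564)*x^6*y^4 + (-480)*x^6*y^6 + (-564)*x^7 + (-336)*x^7*y^2 + 924*x^7*y^4 + 120*x^7*y^6 + 570*x^8 + (-558)*x^8*y^2 + (-480)*x^8*y^4 + (-96)*x^9 + 606*x^9*y^2 + 90*x^9*y^4 + (-186)*x^10 + (-240)*x^10*y^2 + 150*x^11 + 36*x^11*y^2 + (-48)*x^12 + 6*x^13"

definition AY :: "real \<Rightarrow> real \<Rightarrow> real" where
  "AY x y = (-72)*y^1 + 174*y^3 + (-114)*y^5 + 12*y^7 + (-12)*y^9 + 6*y^11 + 6*y^13 + 276*x^1*y^1 + (-672)*x^1*y^3 + 408*x^1*y^5 + 48*x^1*y^7 + (-12)*x^1*y^9 + (-48)*x^1*y^11 + (-210)*x^2*y^1 + 780*x^2*y^3 + (-684)*x^2*y^5 + (-96)*x^2*y^7 + 174*x^2*y^9 + 36*x^2*y^11 + (-480)*x^3*y^1 + 240*x^3*y^3 + 720*x^3*y^5 + (-240)*x^3*y^7 + (-240)*x^3*y^9 + 894*x^4*y^1 + (-1404)*x^4*y^3 + (-216)*x^4*y^5 + 636*x^4*y^7 + 90*x^4*y^9 + (-168)*x^5*y^1 + 1296*x^5*y^3 + (-648)*x^5*y^5 + (-480)*x^5*y^7 + (-708)*x^6*y^1 + (-192)*x^6*y^3 + 924*x^6*y^5 + 120*x^6*y^7 + 624*x^7*y^1 + (-624)*x^7*y^3 + (-480)*x^7*y^5 + (-60)*x^8*y^1 + 606*x^8*y^3 + 90*x^8*y^5 + (-204)*x^9*y^1 + (-240)*x^9*y^3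 + 150*x^10*y^1 + 36*x^10*y^3 + (-48)*x^11*y^1 + 6*x^12*y^1"

definition AXX :: "real \<Rightarrow> real \<Rightarrow> real" where
  "AXX x y = 36 + (-414)*y^2 + 1044*y^4 + (-1038)*y^6 + 444*y^8 + (-90)*y^10 + 12*y^12 + 6*y^14 + (-348)*x^1 + 1968*x^1*y^2 + (-3588)*x^1*y^4 + 2496*x^1*y^6 + (-420)*x^1*y^8 + (-48)*x^1*y^10 + (-60)*x^1*y^12 + 1446*x^2 + (-3396)*x^2*y^2 + 3510*x^2*y^4 + (-2088)*x^2*y^6 + 66*x^2*y^8 + 396*x^2*y^10 + 66*x^2*y^12 + (-3240)*x^3 + 2760*x^3*y^2 + 1680*x^3*y^4 + 720*x^3*y^6 + (-1320)*x^3*y^8 + (-600)*x^3*y^10 + 3720*x^4 + (-3210)*x^4*y^2 + (-5760)*x^4*y^4 + 2220*x^4*y^6 + 2760*x^4*y^8 + 270*x^4*y^10 + (-372)*x^5 + 7392*x^5*y^2 + 1800*x^5*y^4 + (-6720)*x^5*y^6 + (-2100)*x^5*y^8 + (-5454)*x^6 + (-8088)*x^6*y^2 + 7668*x^6*y^4 + 7320*x^6*y^6 + 570*x^6*y^8 + 8208*x^7 + (-240)*x^7*y^2 + (-12720)*x^7*y^4 + (-3600)*x^7*y^6 + (-4860)*x^8 + 9390*x^8*y^2 + 9180*x^8*y^4 + 690*x^8*y^6 + (-900)*x^9 + (-10320)*x^9*y^2 + (-3300)*x^9*y^4 + 3786*x^10 + 5532*x^10*y^2 + 486*x^10*y^4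 + (-3048)*x^11 + (-1560)*x^11*y^2 + 1296*x^12 + 186*x^12*y^2 + (-300)*x^13 + 30*x^14"

definition AYY :: "real \<Rightarrow> real \<Rightarrow> real" where
  "AYY x y = (-72) + 1026*y^2 + (-1440)*y^4 + 426*y^6 + (-120)*y^8 + 54*y^10 + 96*y^12 + 30*y^14 + 420*x^1 + (-4992)*x^1*y^2 + 6540*x^1*y^4 + (-1056)*x^1*y^6 + 60*x^1*y^8 + (-672)*x^1*y^10 + (-300)*x^1*y^12 + (-834)*x^2 + 8364*x^2*y^2 + (-11970)*x^2*y^4 + 792*x^2*y^6 + 1770*x^2*y^8 + 1692*x^2*y^10 + 186*x^2*y^12 + 216*x^3 + (-2616)*x^3*y^2 + 11280*x^3*y^4 + (-2160)*x^3*y^6 + (-5160)*x^3*y^8 + (-1560)*x^3*y^10 + 1644*x^4 + (-9570)*x^4*y^2 + (-4680)*x^4*y^4 + 7788*x^4*y^6 + 6060*x^4*y^8 + 486*x^4*y^10 + (-2436)*x^5 + 14208*x^5*y^2 + (-3960)*x^5*y^4 + (-12000)*x^5*y^6 + (-3300)*x^5*y^8 + 522*x^6 + (-7608)*x^6*y^2 + 10980*x^6*y^4 + 9240*x^6*y^6 + 690*x^6*y^8 + 1872*x^7 + (-1200)*x^7*y^2 + (-11760)*x^7*y^4 + (-3600)*x^7*y^6 + (-2016)*x^8 + 5406*x^8*y^2 + 6840*x^8*y^4 + 570*x^8*y^6 + 540*x^9 + (-4800)*x^9*y^2 + (-2100)*x^9*y^4 + 498*x^10 + 2316*x^10*y^2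 + 270*x^10*y^4 + (-552)*x^11 + (-600)*x^11*y^2 + 252*x^12 + 66*x^12*y^2 + (-60)*x^13 + 6*x^14"

definition QQ :: "real \<Rightarrow> real \<Rightarrow> real" where
  "QQ x y = (-9) + 144*y^2 + 36*y^4 + 36*y^6 + 9*y^8 + (-432)*x^1*y^2 + (-216)*x^1*y^4 + (-72)*x^1*y^6 + 144*x^2 + 648*x^2*y^2 + 324*x^2*y^4 + 36*x^2*y^6 + (-432)*x^3 + (-720)*x^3*y^2 + (-216)*x^3*y^4 + 612*x^4 + 540*x^4*y^2 + 54*x^4*y^4 + (-504)*x^5 + (-216)*x^5*y^2 + 252*x^6 + 36*x^6*y^2 + (-72)*x^7 + 9*x^8"

definition BX :: "real \<Rightarrow> real \<Rightarrow> real" where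
  "BX x y = (-72) + 720*y^2 + (-360)*y^4 + 360*x^1 + (-2160)*x^1*y^2 + 360*x^1*y^4 + (-720)*x^2 + 2160*x^2*y^2 + 720*x^3 + (-720)*x^3*y^2 + (-360)*x^4 + 72*x^5"

definition BY :: "real \<Rightarrow> real \<Rightarrow> real" where
  "BY x y = 360*y^1 + (-720)*y^3 + 72*y^5 + (-1440)*x^1*y^1 + 1440*x^1*y^3 + 2160*x^2*y^1 + (-720)*x^2*y^3 + (-1440)*x^3*y^1 + 360*x^4*y^1"

definition BXX :: "real \<Rightarrow> real \<Rightarrow> real" where
  "BXX x y = (-360) + 5400*y^2 + (-5400)*y^4 + 360*y^6 + 2160*x^1 + (-21600)*x^1*y^2 + 10800*x^1*y^4 + (-5400)*x^2 + 32400*x^2*y^2 + (-5400)*x^2*y^4 + 7200*x^3 + (-21600)*x^3*y^2 + (-5400)*x^4 + 5400*x^4*y^2 + 2160*x^5 + (-360)*x^6"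

definition BYY :: "real \<Rightarrow> real \<Rightarrow> real" where
  "BYY x y = 360 + (-5400)*y^2 + 5400*y^4 + (-360)*y^6 + (-2160)*x^1 + 21600*x^1*y^2 + (-10800)*x^1*y^4 + 5400*x^2 + (-32400)*x^2*y^2 + 5400*x^2*y^4 + (-7200)*x^3 + 21600*x^3*y^2 + 5400*x^4 + (-5400)*x^4*y^2 + (-2160)*x^5 + 360*x^6"

lemma qd:
  fixes N Dd :: "real \<Rightarrow> real"
  assumes "(N has_real_derivative N') (at x)" "(Dd has_real_derivative D') (at x)" "Dd x \<noteq> 0"
    "N' * Dd x - of_nat k * N x * D' = M"
  shows "((\<lambda>s. N s / Dd s ^ k) has_real_derivative M / Dd x ^ (k+1)) (at x)"
proof -
  have "((\<lambda>s. N s / Dd s ^ k) has_real_derivative (N' * Dd x ^ k - N x * (of_nat k * (D' * Dd x ^ (k - Suc 0)))) / (Dd x ^ k * Dd x ^ k)) (at x)"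
    by (rule DERIV_divide[OF assms(1) DERIV_power[OF assms(2)]]) (simp add: assms(3))
  also have "(N' * Dd x ^ k - N x * (of_nat k * (D' * Dd x ^ (k - Suc 0)))) / (Dd x ^ k * Dd x ^ k) = M / Dd x ^ (k+1)"
  proof (cases k)
    case 0 then show ?thesis using assms(3,4) by (simp add: field_simps)
  next
    case (Suc j)
    have e1: "N' * Dd x ^ k - N x * (of_nat k * (D' * Dd x ^ (k - Suc 0))) = M * Dd x ^ j"
      unfolding assms(4)[symmetric] Suc by (simp add: algebra_simps)
    have e2: "Dd x ^ k * Dd x ^ k = Dd x ^ (k+1) * Dd x ^ j"
      unfolding Suc by (simp add: algebra_simps)
    show ?thesis unfolding e1 e2 using assms(3) by simp
  qed
  finally show ?thesis .
qed

lemma dNUx: assumes "Dp x y \<noteq> 0"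
  shows "((\<lambda>s. NU s y / Dp s y ^ 3) has_real_derivative AX x y / Dp x y ^ 4) (at x)"
proof -
  have "((\<lambda>s. NU s y / Dp s y ^ 3) has_real_derivative AX x y / Dp x y ^ (3+1)) (at x)"
    apply (rule qd[where M="AX x y"])
    unfolding NU_def Sp_def Dp_def
    apply (rule derivative_eq_intros refl)+
    using assms apply (simp add: Dp_def)
    apply (simp add: AX_def)
    apply algebra
    done
  then show ?thesis by simp
qed

lemma dNUy: assumes "Dp x y \<noteq> 0"
  shows "((\<lambda>s. NU x s / Dp x s ^ 3) has_real_derivative AY x y / Dp x y ^ 4) (at y)"
proof -
  have "((\<lambda>s. NU x s / Dp x s ^ 3) has_real_derivative AY x y / Dp x y ^ (3+1)) (at y)"
    apply (rule qd[where M="AY x y"])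
    unfolding NU_def Sp_def Dp_def
    apply (rule derivative_eq_intros refl)+
    using assms apply (simp add: Dp_def)
    apply (simp add: AY_def)
    apply algebra
    done
  then show ?thesis by simp
qed

lemma dAX: assumes "Dp x y \<noteq> 0"
  shows "((\<lambda>s. AX s y / Dp s y ^ 4) has_real_derivative AXX x y / Dp x y ^ 5) (at x)"
proof -
  have "((\<lambda>s. AX s y / Dp s y ^ 4) has_real_derivative AXX x y / Dp x y ^ (4+1)) (at x)"
    apply (rule qd[where M="AXX x y"])
    unfolding AX_def Dp_def
    apply (rule derivative_eq_intros refl)+
    using assms apply (simp add: Dp_def)
    apply (simp add: AXX_def)
    apply algebra
    done
  then show ?thesis by simp
qed

lemma dAY: assumes "Dp x y \<noteq> 0"
  shows "((\<lambda>s. AY x s / Dp x s ^ 4) has_real_derivative AYY x y / Dp x y ^ 5) (at y)"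
proof -
  have "((\<lambda>s. AY x s / Dp x s ^ 4) has_real_derivative AYY x y / Dp x y ^ (4+1)) (at y)"
    apply (rule qd[where M="AYY x y"])
    unfolding AY_def Dp_def
    apply (rule derivative_eq_intros refl)+
    using assms apply (simp add: Dp_def)
    apply (simp add: AYY_def)
    apply algebra
    done
  then show ?thesis by simp
qed

lemma dQx: assumes "Dp x y \<noteq> 0"
  shows "((\<lambda>s. QQ s y / Dp s y ^ 4) has_real_derivative BX x y / Dp x y ^ 5) (at x)"
proof -
  have "((\<lambda>s. QQ s y / Dp s y ^ 4) has_real_derivative BX x y / Dp x y ^ (4+1)) (at x)"
    apply (rule qd[where M="BX x y"])
    unfolding QQ_def Dp_def
    apply (rule derivative_eq_intros refl)+
    using assms apply (simp add: Dp_def)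
    apply (simp add: BX_def)
    apply algebra
    done
  then show ?thesis by simp
qed

lemma dQy: assumes "Dp x y \<noteq> 0"
  shows "((\<lambda>s. QQ x s / Dp x s ^ 4) has_real_derivative BY x y / Dp x y ^ 5) (at y)"
proof -
  have "((\<lambda>s. QQ x s / Dp x s ^ 4) has_real_derivative BY x y / Dp x y ^ (4+1)) (at y)"
    apply (rule qd[where M="BY x y"])
    unfolding QQ_def Dp_def
    apply (rule derivative_eq_intros refl)+
    using assms apply (simp add: Dp_def)
    apply (simp add: BY_def)
    apply algebra
    done
  then show ?thesis by simp
qed

lemma dBX: assumes "Dp x y \<noteq> 0"
  shows "((\<lambda>s. BX s y / Dp s y ^ 5) has_real_derivative BXX x y / Dp x y ^ 6) (at x)"
proof -
  have "((\<lambda>s. BX s y / Dp s y ^ 5) has_real_derivative BXX x y / Dp x y ^ (5+1)) (at x)"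
    apply (rule qd[where M="BXX x y"])
    unfolding BX_def Dp_def
    apply (rule derivative_eq_intros refl)+
    using assms apply (simp add: Dp_def)
    apply (simp add: BXX_def)
    apply algebra
    done
  then show ?thesis by simp
qed

lemma dBY: assumes "Dp x y \<noteq> 0"
  shows "((\<lambda>s. BY x s / Dp x s ^ 5) has_real_derivative BYY x y / Dp x y ^ 6) (at y)"
proof -
  have "((\<lambda>s. BY x s / Dp x s ^ 5) has_real_derivative BYY x y / Dp x y ^ (5+1)) (at y)"
    apply (rule qd[where M="BYY x y"])
    unfolding BY_def Dp_def
    apply (rule derivative_eq_intros refl)+
    using assms apply (simp add: Dp_def)
    apply (simp add: BYY_def)
    apply algebra
    done
  then show ?thesis by simp
qed

lemma lapA: "AXX x y + AYY x y = 4 * Sp x y ^ 2 * QQ x y * Dp x y"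
  unfolding AXX_def AYY_def Sp_def QQ_def Dp_def by algebra
lemma lapB: "BXX x y + BYY x y = 0"
  unfolding BXX_def BYY_def by algebra



lemma ballD:
  assumes "w \<in> ball (0::complex) 1"
  shows "Dp (Re w) (Im w) \<noteq> 0" "Sp (Re w) (Im w) \<noteq> 0"
    "Dp (Re w) (Im w) = cmod (1 - w) ^ 2" "Sp (Re w) (Im w) = 1 - cmod w ^ 2"
proof -
  show d: "Dp (Re w) (Im w) = cmod (1 - w) ^ 2"
    unfolding Dp_def cmod_power2 by simp
  show s: "Sp (Re w) (Im w) = 1 - cmod w ^ 2"
    unfolding Sp_def cmod_power2 by simp
  have "w \<noteq> 1" using assms by auto
  then show "Dp (Re w) (Im w) \<noteq> 0" unfolding d by simp
  have "cmod w < 1" using assms by simp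
  then have "cmod w ^ 2 < 1" by (simp add: power_less_one_iff)
  then show "Sp (Re w) (Im w) \<noteq> 0" unfolding s by simp
qed

theorem proposition3p1:
  shows "w2_biharmonic (\<lambda>z.
      3 * (1 - (cmod z)^2)^4 / (cmod (1 - z))^2
    + 3 * (1 - (cmod z)^2)^5 / (cmod (1 - z))^4
    - 3 / 2 * (1 - (cmod z)^2)^4 / (cmod (1 - z))^4
    + (1 - (cmod z)^2)^6 / (cmod (1 - z))^6)" (is "w2_biharmonic ?u")
proof -
  define B where "B = ball (0::complex) 1"
  have oB: "open B" unfolding B_def by simp
  define R where "R = (\<lambda>w::complex. Re w)"
  define I where "I = (\<lambda>w::complex. Im w)"
  have u_eq: "?u w = NU (Re w) (Im w) / Dp (Re w) (Im w) ^ 3" if "w \<in> B" for w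
  proof -
    note bd = ballD[of w, folded B_def, OF that]
    define d where "d = cmod (1 - w)"
    define s where "s = 1 - cmod w ^ 2"
    have d0: "d \<noteq> 0" using bd(1) bd(3) d_def by auto
    have "?u w = 3 * s^4 / d^2 + 3 * s^5 / d^4 - 3/2 * s^4 / d^4 + s^6 / d^6"
      unfolding d_def s_def by simp
    also have "\<dots> = (3 * s^4 * (d^2)^2 + 3 * s^5 * d^2 - 3/2 * s^4 * d^2 + s^6) / (d^2)^3"
      using d0 by (simp add: field_simps) algebra
    also have "\<dots> = NU (Re w) (Im w) / Dp (Re w) (Im w) ^ 3"
      unfolding NU_def bd(3) bd(4) d_def s_def ..
    finally show ?thesis .
  qed
  have P1: "has_pdx ?u w \<and> pdx ?u w = AX (Re w) (Im w) / Dp (Re w) (Im w) ^ 4" if "w \<in> B" for w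
    apply (rule pdx_open[OF oB _ _ that, where G="\<lambda>x y. NU x y / Dp x y ^ 3"])
    apply (erule u_eq)
    apply (rule dNUx, rule ballD(1), simp add: B_def)
    done
  have P1y: "has_pdy ?u w \<and> pdy ?u w = AY (Re w) (Im w) / Dp (Re w) (Im w) ^ 4" if "w \<in> B" for w
    apply (rule pdy_open[OF oB _ _ that, where G="\<lambda>x y. NU x y / Dp x y ^ 3"])
    apply (erule u_eq)
    apply (rule dNUy, rule ballD(1), simp add: B_def)
    done
  have P2: "has_pdx (pdx ?u) w \<and> pdx (pdx ?u) w = AXX (Re w) (Im w) / Dp (Re w) (Im w) ^ 5" if "w \<in> B" for w
    apply (rule pdx_open[OF oB _ _ that, where G="\<lambda>x y. AX x y / Dp x y ^ 4"])
    apply (erule conjunct2[OF P1])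
    apply (rule dAX, rule ballD(1), simp add: B_def)
    done
  have P2y: "has_pdy (pdy ?u) w \<and> pdy (pdy ?u) w = AYY (Re w) (Im w) / Dp (Re w) (Im w) ^ 5" if "w \<in> B" for w
    apply (rule pdy_open[OF oB _ _ that, where G="\<lambda>x y. AY x y / Dp x y ^ 4"])
    apply (erule conjunct2[OF P1y])
    apply (rule dAY, rule ballD(1), simp add: B_def)
    done
  define g where "g = (\<lambda>w. Lap ?u w / w2 w)"
  have g_eq: "g w = QQ (Re w) (Im w) / Dp (Re w) (Im w) ^ 4" if "w \<in> B" for w
  proof -
    note bd = ballD[of w, folded B_def, OF that]
    have "Lap ?u w = (AXX (Re w) (Im w) + AYY (Re w) (Im w)) / Dp (Re w) (Im w) ^ 5 / 4"
      unfolding Lap_def using P2[OF that] P2y[OF that] by (simp add: add_divide_distrib)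
    also have "\<dots> = Sp (Re w) (Im w) ^ 2 * QQ (Re w) (Im w) / Dp (Re w) (Im w) ^ 4"
      unfolding lapA using bd(1) by (simp add: field_simps) (metis power_Suc numeral_eq_Suc pred_numeral_simps(3) semiring_norm(26))
    finally have "Lap ?u w = Sp (Re w) (Im w) ^ 2 * QQ (Re w) (Im w) / Dp (Re w) (Im w) ^ 4" .
    moreover have "w2 w = Sp (Re w) (Im w) ^ 2" unfolding w2_def bd(4) ..
    ultimately show ?thesis unfolding g_def using bd(2) by simp
  qed
  have Q1: "has_pdx g w \<and> pdx g w = BX (Re w) (Im w) / Dp (Re w) (Im w) ^ 5" if "w \<in> B" for w
    apply (rule pdx_open[OF oB _ _ that, where G="\<lambda>x y. QQ x y / Dp x y ^ 4"])
    apply (erule g_eq)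
    apply (rule dQx, rule ballD(1), simp add: B_def)
    done
  have Q1y: "has_pdy g w \<and> pdy g w = BY (Re w) (Im w) / Dp (Re w) (Im w) ^ 5" if "w \<in> B" for w
    apply (rule pdy_open[OF oB _ _ that, where G="\<lambda>x y. QQ x y / Dp x y ^ 4"])
    apply (erule g_eq)
    apply (rule dQy, rule ballD(1), simp add: B_def)
    done
  have Q2: "has_pdx (pdx g) w \<and> pdx (pdx g) w = BXX (Re w) (Im w) / Dp (Re w) (Im w) ^ 6" if "w \<in> B" for w
    apply (rule pdx_open[OF oB _ _ that, where G="\<lambda>x y. BX x y / Dp x y ^ 5"])
    apply (erule conjunct2[OF Q1])
    apply (rule dBX, rule ballD(1), simp add: B_def)
    done
  have Q2y: "has_pdy (pdy g) w \<and> pdy (pdy g) w = BYY (Re w) (Im w) / Dp (Re w) (Im w) ^ 6" if "w \<in> B" for w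
    apply (rule pdy_open[OF oB _ _ that, where G="\<lambda>x y. BY x y / Dp x y ^ 5"])
    apply (erule conjunct2[OF Q1y])
    apply (rule dBY, rule ballD(1), simp add: B_def)
    done
  show ?thesis unfolding w2_biharmonic_def
  proof (intro ballI conjI)
    fix z :: complex assume zB0: "z \<in> ball 0 1"
    then have zB: "z \<in> B" unfolding B_def .
    have evB: "\<forall>\<^sub>F w in at z. w \<in> B" by (rule eventually_at_in_open'[OF oB zB])
    show "Lap_exists ?u z" unfolding Lap_exists_def
      using P1 P1y P2 P2y zB evB by (auto elim!: eventually_mono)
    show "Lap_exists (\<lambda>w. Lap ?u w / w2 w) z" unfolding Lap_exists_def g_def[symmetric]
      using Q1 Q1y Q2 Q2y zB evB by (auto elim!: eventually_mono)
    have "Lap g z = (BXX (Re z) (Im z) + BYY (Re z) (Im z)) / Dp (Re z) (Im z) ^ 6 / 4"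
      unfolding Lap_def using Q2[OF zB] Q2y[OF zB] by (simp add: add_divide_distrib)
    then have "Lap g z = 0" using lapB by simp
    then show "Lap (\<lambda>w. Lap ?u w / w2 w) z = 0" unfolding g_def .
  qed
qed
end
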